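(* Let $\mathcal N_d$ be the set of nilpotent linear endomorphisms of $\mathbb K^d$, $K\subset\mathcal N_d$ compact, and $\|\cdot\|$ a norm on $\mathrm{End}(\mathbb K^d)$. Then there exists $C=C(K,\|\cdot\|)>0$ such that $\|\exp(tX)-\mathrm{id}\|\le C\,t\,\|\exp(X)-\mathrm{id}\|$ for all $t\in[0,1]$ and all $X\in K$.
   Context: $\mathbb K\in\{\mathbb R,\mathbb C\}$; $\exp$ is the matrix exponential. *)

theory Defs
  imports "HOL-Analysis.Analysis"
begin

text \<open>Matrices 'K^'n^'n represent End(K^d) with d = CARD('n). Matrix power and
  matrix exponential (with respect to matrix multiplication **).\<close>

primrec matpow :: "'a::semiring_1^'n^'n \<Rightarrow> nat \<Rightarrow> 'a^'n^'n" where
  "matpow X 0 = mat 1"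
| "matpow X (Suc k) = X ** matpow X k"

definition mat_exp :: "'a::{real_normed_field,banach}^'n^'n \<Rightarrow> 'a^'n^'n" where
  "mat_exp X = (\<Sum>k. inverse (fact k) *\<^sub>R matpow X k)"

definition nilpotent_mat :: "'a::semiring_1^'n^'n \<Rightarrow> bool" where
  "nilpotent_mat X \<longleftrightarrow> (\<exists>m. matpow X m = 0)"

definition mat_scale :: "'a::times \<Rightarrow> 'a^'n^'n \<Rightarrow> 'a^'n^'n" where
  "mat_scale c X = (\<chi> i j. c * X $ i $ j)"

definition is_mat_norm :: "('a::real_normed_field^'n^'n \<Rightarrow> real) \<Rightarrow> bool" where
  "is_mat_norm N \<longleftrightarrow>
     (\<forall>X. N X = 0 \<longrightarrow> X = 0) \<and>
     (\<forall>c X. N (mat_scale c X) = norm c * N X) \<and>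
     (\<forall>X Y. N (X + Y) \<le> N X + N Y)"

end

theory Submission
  imports Defs
begin

lemma mm_zero_left[simp]: "(0::'a::semiring_1^'n^'m) ** B = 0"
  by (simp add: matrix_matrix_mult_def vec_eq_iff)

lemma mm_add_left: "((A::'a::semiring_1^'n^'m) + B) ** C = A ** C + B ** C"
  by (simp add: matrix_matrix_mult_def vec_eq_iff sum.distrib distrib_right)

lemma mm_sum_right: "(A::'a::semiring_1^'n^'m) ** sum f S = sum (\<lambda>i. A ** f i) S"
  by (induct S rule: infinite_finite_induct) (simp_all add: matrix_add_ldistrib)

lemma matpow_add: "matpow X (a + b) = matpow X a ** matpow X b"
  by (induct a) (simp_all add: matrix_mul_assoc)

lemma matpow_one: "matpow X 1 = X"
  by simp

lemma matpow_Suc': "matpow X (Suc k) = matpow X k ** X"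
  using matpow_add[of X k 1] by simp

lemma matpow_zero_ge:
  assumes "matpow X m = 0" "m \<le> k" shows "matpow X k = 0"
proof -
  have "matpow X k = matpow X (k - m) ** matpow X m"
    using matpow_add[of X "k-m" m] assms(2) by simp
  then show ?thesis using assms(1) by (simp add: matrix_matrix_mult_def vec_eq_iff)
qed

lemma matpow_scaleR:
  "matpow (t *\<^sub>R (X::'a::real_algebra_1^'n^'n)) k = (t ^ k) *\<^sub>R matpow X k"
  by (induct k) (simp_all add: matrix_scalar_ac scalar_matrix_assoc[symmetric])

lemma mat_scale_of_real:
  "mat_scale (of_real t) (X::'a::real_algebra_1^'n^'n) = t *\<^sub>R X"
  by (simp add: mat_scale_def vec_eq_iff of_real_def)

lemma mat_exp_fin:
  assumes "matpow X m = 0"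
  shows "mat_exp X = (\<Sum>k<m. inverse (fact k) *\<^sub>R matpow X k)"
  unfolding mat_exp_def
  by (rule suminf_finite) (use matpow_zero_ge[OF assms] in auto)

lemma norm_nth_le_gen: "norm (x $ i) \<le> norm (x::'a::real_normed_vector^'n)"
  unfolding norm_vec_def by (rule member_le_L2_set) auto

lemma norm_entry: "norm (A $ i $ j) \<le> norm (A::'a::real_normed_vector^'n^'m)"
  using norm_nth_le_gen[of "A $ i" j] norm_nth_le_gen[of A i] by linarith

lemma norm_vec_le_sum: "norm x \<le> (\<Sum>i\<in>UNIV. norm (x $ i))"
  unfolding norm_vec_def by (rule L2_set_le_sum) simp

lemma norm_mm:
  fixes A B :: "'a::real_normed_field^'n^'n"
  shows "norm (A ** B) \<le> real CARD('n) ^ 3 * norm A * norm B"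
proof -
  have e: "norm ((A ** B) $ i $ j) \<le> real CARD('n) * (norm A * norm B)" for i j
  proof -
    have "norm ((A ** B) $ i $ j) = norm (\<Sum>k\<in>UNIV. A $ i $ k * B $ k $ j)"
      by (simp add: matrix_matrix_mult_def)
    also have "\<dots> \<le> (\<Sum>k\<in>(UNIV::'n set). norm A * norm B)"
      by (rule sum_norm_le) (simp add: norm_mult mult_mono norm_entry)
    finally show ?thesis by simp
  qed
  have "norm (A ** B) \<le> (\<Sum>i\<in>UNIV. norm ((A ** B) $ i))" by (rule norm_vec_le_sum)
  also have "\<dots> \<le> (\<Sum>i\<in>(UNIV::'n set). \<Sum>j\<in>(UNIV::'n set). norm ((A ** B) $ i $ j))"
    by (rule sum_mono) (rule norm_vec_le_sum)
  also have "\<dots> \<le> (\<Sum>i\<in>(UNIV::'n set). \<Sum>j\<in>(UNIV::'n set). real CARD('n) * (norm A * norm B))"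
    by (intro sum_mono e)
  also have "\<dots> = real CARD('n) ^ 3 * norm A * norm B"
    by (simp add: power3_eq_cube)
  finally show ?thesis .
qed


lemma nil_index:
  fixes X :: "'a::{real_normed_field,euclidean_space}^'n^'n"
  assumes m: "matpow X m = 0"
  shows "matpow X DIM('a^'n) = 0"
proof -
  define Ker where "Ker k = {v::'a^'n. matpow X k *v v = 0}" for k
  have sub: "subspace (Ker k)" for k
    unfolding Ker_def by (rule linear_subspace_kernel) simp
  have mono: "Ker k \<subseteq> Ker (Suc k)" for k
    unfolding Ker_def by (auto simp: matrix_vector_mul_assoc[symmetric])
  have stab: "Ker (Suc k) = Ker k \<Longrightarrow> Ker (Suc (Suc k)) = Ker (Suc k)" for k
  proof -
    assume h: "Ker (Suc k) = Ker k"
    have "Ker (Suc (Suc k)) \<subseteq> Ker (Suc k)"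
    proof
      fix v assume "v \<in> Ker (Suc (Suc k))"
      then have "matpow X (Suc k) *v (X *v v) = 0"
        unfolding Ker_def using matpow_Suc'[of X "Suc k"]
        by (simp add: matrix_vector_mul_assoc)
      then have "X *v v \<in> Ker (Suc k)" unfolding Ker_def by simp
      then have "X *v v \<in> Ker k" using h by simp
      then show "v \<in> Ker (Suc k)" unfolding Ker_def using matpow_Suc'[of X k]
        by (simp add: matrix_vector_mul_assoc)
    qed
    then show ?thesis using mono[of "Suc k"] by blast
  qed
  have st2: "Ker (Suc k) = Ker k \<Longrightarrow> Ker (Suc (k + j)) = Ker (k + j)" for k j
    by (induct j) (simp_all add: stab)
  have staball: "Ker (Suc k) = Ker k \<Longrightarrow> Ker (k + j) = Ker k" for k j
    by (induct j) (simp_all add: st2)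
  have full: "Ker (k + m) = UNIV" for k
    unfolding Ker_def using matpow_zero_ge[OF m, of "k+m"] by simp
  have claim: "Ker k = UNIV \<or> k \<le> dim (Ker k)" for k
  proof (induct k)
    case 0 then show ?case by simp
  next
    case (Suc k)
    show ?case
    proof (cases "Ker (Suc k) = UNIV")
      case True then show ?thesis by simp
    next
      case False
      then have nk: "Ker k \<noteq> UNIV" using mono[of k] by blast
      with Suc have kd: "k \<le> dim (Ker k)" by simp
      have ne: "Ker (Suc k) \<noteq> Ker k"
      proof
        assume "Ker (Suc k) = Ker k"
        then have "Ker (k + m) = Ker k" by (rule staball)
        then show False using full nk by simp
      qed
      have "span (Ker k) \<subset> span (Ker (Suc k))"
        using mono[of k] ne by (simp add: span_eq_iff[THEN iffD2, OF sub] psubset_eq)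
      then have "dim (Ker k) < dim (Ker (Suc k))" by (rule dim_psubset)
      then show ?thesis using kd by simp
    qed
  qed
  have "Ker DIM('a^'n) = UNIV"
  proof (cases "Ker DIM('a^'n) = UNIV")
    case False
    then have "DIM('a^'n) \<le> dim (Ker DIM('a^'n))" using claim by blast
    then have "dim (Ker DIM('a^'n)) = DIM('a^'n)" using dim_subset_UNIV[of "Ker DIM('a^'n)"] by simp
    then have "span (Ker DIM('a^'n)) = UNIV" by (metis dim_eq_full)
    then show ?thesis by (simp add: span_eq_iff[THEN iffD2, OF sub])
  qed simp
  then show ?thesis unfolding Ker_def by (auto simp: matrix_eq)
qed


context
  fixes N :: "'a::{real_normed_field,euclidean_space}^'n^'n \<Rightarrow> real"
  assumes NN: "is_mat_norm N"
begin

lemma N_scale: "N (mat_scale c X) = norm c * N X"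
  using NN unfolding is_mat_norm_def by blast

lemma N_tri: "N (X + Y) \<le> N X + N Y"
  using NN unfolding is_mat_norm_def by blast

lemma N_zero_imp: "N X = 0 \<Longrightarrow> X = 0"
  using NN unfolding is_mat_norm_def by blast

lemma N_0: "N 0 = 0"
proof -
  have "mat_scale 0 (0::'a^'n^'n) = 0" by (simp add: mat_scale_def vec_eq_iff)
  then show ?thesis using N_scale[of 0 0] by simp
qed

lemma N_scaleR: "N (r *\<^sub>R X) = \<bar>r\<bar> * N X"
  using N_scale[of "of_real r" X] by (simp add: mat_scale_of_real)

lemma N_nonneg: "N X \<ge> 0"
proof -
  have "N (-X) = N X" using N_scaleR[of "-1" X] by simp
  moreover have "N (X + - X) \<le> N X + N (- X)" by (rule N_tri)
  ultimately show ?thesis by (simp add: N_0)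
qed

lemma N_sum: "N (sum f S) \<le> (\<Sum>i\<in>S. N (f i))"
proof (induct S rule: infinite_finite_induct)
  case (insert x F)
  then show ?case using N_tri[of "f x" "sum f F"] by simp
qed (simp_all add: N_0)

lemma N_upper: "\<exists>M\<ge>0. \<forall>A. N A \<le> M * norm A"
proof -
  define Eij :: "'n \<Rightarrow> 'n \<Rightarrow> 'a^'n^'n" where "Eij i j = (\<chi> a b. if a = i \<and> b = j then (1::'a) else 0)" for i j
  define M where "M = (\<Sum>i\<in>(UNIV::'n set). \<Sum>j\<in>(UNIV::'n set). N (Eij i j))"
  have decomp: "A = (\<Sum>i\<in>UNIV. \<Sum>j\<in>UNIV. mat_scale (A $ i $ j) (Eij i j))" for A
  proof -
    have c: "(\<Sum>x\<in>UNIV. \<Sum>y\<in>UNIV. A$x$y * (if a = x \<and> b = y then (1::'a) else 0)) = A $ a $ b"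
      for a b
    proof -
      have "(\<Sum>y\<in>UNIV. A$x$y * (if a = x \<and> b = y then (1::'a) else 0)) = (if x = a then A$x$b else 0)" for x
        by (cases "x = a") (simp_all add: if_distrib[of "\<lambda>u. _ * u"] cong: if_cong)
      then show ?thesis by simp
    qed
    show ?thesis
      by (simp add: vec_eq_iff mat_scale_def Eij_def c)
  qed
  have "N A \<le> M * norm A" for A
  proof -
    have "N A \<le> (\<Sum>i\<in>UNIV. N (\<Sum>j\<in>UNIV. mat_scale (A $ i $ j) (Eij i j)))"
      by (subst decomp) (rule N_sum)
    also have "\<dots> \<le> (\<Sum>i\<in>UNIV. \<Sum>j\<in>UNIV. N (mat_scale (A $ i $ j) (Eij i j)))"
      by (intro sum_mono N_sum)
    also have "\<dots> \<le> (\<Sum>i\<in>UNIV. \<Sum>j\<in>UNIV. norm A * N (Eij i j))"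
      by (intro sum_mono) (simp add: N_scale mult_right_mono norm_entry N_nonneg)
    also have "\<dots> = M * norm A"
      by (simp add: M_def sum_distrib_left sum_distrib_right mult.commute)
    finally show ?thesis .
  qed
  moreover have "M \<ge> 0" unfolding M_def by (intro sum_nonneg N_nonneg)
  ultimately show ?thesis by blast
qed

lemma N_lower: "\<exists>L\<ge>0. \<forall>A. norm A \<le> L * N A"
proof -
  obtain M where M: "M \<ge> 0" "\<And>A. N A \<le> M * norm A" using N_upper by blast
  have lip: "\<bar>N A - N B\<bar> \<le> M * norm (A - B)" for A B
  proof -
    have "N A \<le> N B + N (A - B)" using N_tri[of B "A - B"] by simp
    moreover have "N B \<le> N A + N (B - A)" using N_tri[of A "B - A"] by simp
    moreover have "N (B - A) = N (A - B)"
      using N_scaleR[of "-1" "A - B"] by simp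
    ultimately show ?thesis using M(2)[of "A - B"] by linarith
  qed
  have cont: "continuous_on S N" for S
    unfolding continuous_on_iff
  proof (intro ballI allI impI)
    fix x e assume "x \<in> S" "(0::real) < e"
    show "\<exists>d>0. \<forall>x'\<in>S. dist x' x < d \<longrightarrow> dist (N x') (N x) < e"
    proof (intro exI[of _ "e / (M + 1)"] conjI ballI impI)
      show "e / (M + 1) > 0" using \<open>0 < e\<close> M(1) by simp
      fix x' assume "dist x' x < e / (M + 1)"
      then have "(M + 1) * norm (x' - x) < e" using M(1) by (simp add: dist_norm field_simps)
      moreover have "M * norm (x' - x) \<le> (M + 1) * norm (x' - x)" by (simp add: mult_right_mono)
      ultimately show "dist (N x') (N x) < e" using lip[of x' x] by (simp add: dist_real_def)
    qed
  qed
  have "sphere (0::'a^'n^'n) 1 \<noteq> {}" by (simp add: sphere_eq_empty)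
  then obtain A0 where A0: "A0 \<in> sphere 0 1" "\<And>A. A \<in> sphere 0 1 \<Longrightarrow> N A0 \<le> N A"
    using continuous_attains_inf[OF compact_sphere _ cont] by blast
  have "A0 \<noteq> 0" using A0(1) by auto
  then have mpos: "N A0 > 0" using N_zero_imp N_nonneg[of A0] by force
  have "norm A \<le> (1 / N A0) * N A" for A
  proof (cases "A = 0")
    case True then show ?thesis by (simp add: N_0)
  next
    case False
    then have "(1 / norm A) *\<^sub>R A \<in> sphere 0 1" by simp
    then have "N A0 \<le> N ((1 / norm A) *\<^sub>R A)" by (rule A0(2))
    also have "\<dots> = N A / norm A" by (simp add: N_scaleR)
    finally show ?thesis using mpos False by (simp add: field_simps)
  qed
  moreover have "1 / N A0 \<ge> 0" using mpos by simp
  ultimately show ?thesis by blast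
qed

end

lemma main_gen:
  fixes K :: "('a::{real_normed_field,banach,euclidean_space}^'n^'n) set"
    and N :: "'a^'n^'n \<Rightarrow> real"
  assumes cK: "compact K" and nil: "\<forall>X\<in>K. nilpotent_mat X" and NN: "is_mat_norm N"
  shows "\<exists>C>0. \<forall>t\<in>{0..1}. \<forall>X\<in>K.
           N (mat_exp (mat_scale (of_real t) X) - mat 1) \<le> C * t * N (mat_exp X - mat 1)"
proof -
  define D where "D = DIM('a^'n)"
  define E where "E X = mat_exp X - mat 1" for X :: "'a^'n^'n"
  define \<kappa> where "\<kappa> = real CARD('n) ^ 3"
  have kpos: "\<kappa> \<ge> 0" unfolding \<kappa>_def by simp
  have nilD: "matpow X D = 0" if "X \<in> K" for X
    using nil that nil_index unfolding nilpotent_mat_def D_def by blast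
  have D1: "1 \<le> D" unfolding D_def by (simp add: DIM_positive)
  have sum_split: "(\<Sum>k<D. f k) = f 0 + (\<Sum>k\<in>{1..<D}. f k)" for f :: "nat \<Rightarrow> 'a^'n^'n"
    using D1 by (simp add: lessThan_atLeast0 sum.atLeast_Suc_lessThan)
  have Eexp: "E X = (\<Sum>l\<in>{1..<D}. inverse (fact l) *\<^sub>R matpow X l)" if "X \<in> K" for X
    unfolding E_def using mat_exp_fin[OF nilD[OF that]] sum_split by simp
  have Et: "mat_exp (mat_scale (of_real t) X) - mat 1
      = (\<Sum>l\<in>{1..<D}. (t ^ l * inverse (fact l)) *\<^sub>R matpow X l)" if "X \<in> K" for X t
  proof -
    have "matpow (t *\<^sub>R X) D = 0" using nilD[OF that] by (simp add: matpow_scaleR)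
    from mat_exp_fin[OF this] show ?thesis
      by (simp add: mat_scale_of_real sum_split matpow_scaleR mult.commute)
  qed
  have ident: "matpow X j ** E X = (\<Sum>l\<in>{1..<D}. inverse (fact l) *\<^sub>R matpow X (j + l))"
    if "X \<in> K" for X j
    by (simp add: Eexp[OF that] mm_sum_right matrix_scalar_ac scalar_matrix_assoc[symmetric] matpow_add)
  obtain B where B: "B > 0" "\<forall>X\<in>K. norm X \<le> B"
    using compact_imp_bounded[OF cK] bounded_pos by blast
  have Pbd: "norm (matpow X j) \<le> norm (mat 1 :: 'a^'n^'n) * (\<kappa> * B) ^ j" if X: "X \<in> K" for X j
  proof (induct j)
    case 0 then show ?case by simp
  next
    case (Suc j)
    have "norm (matpow X (Suc j)) \<le> \<kappa> * norm X * norm (matpow X j)"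
      using norm_mm[of X "matpow X j"] by (simp add: \<kappa>_def)
    also have "\<dots> \<le> \<kappa> * B * (norm (mat 1 :: 'a^'n^'n) * (\<kappa> * B) ^ j)"
      using Suc B X kpos by (intro mult_mono) (auto intro: mult_left_mono)
    finally show ?case by (simp add: mult_ac)
  qed
  have bkw: "\<exists>c. \<forall>X\<in>K. norm (matpow X k) \<le> c * norm (E X)" if "1 \<le> k" for k
    using that
  proof (induction "D - k" arbitrary: k rule: less_induct)
    case less
    show ?case
    proof (cases "D \<le> k")
      case True then show ?thesis using matpow_zero_ge[OF nilD] by (intro exI[of _ 0]) auto
    next
      case False
      then have kD: "k < D" by simp
      obtain j where kj: "k = Suc j" using less.prems by (cases k) auto
      have "\<forall>k'. \<exists>c. k < k' \<longrightarrow> (\<forall>X\<in>K. norm (matpow X k') \<le> c * norm (E X))"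
      proof
        fix k'
        show "\<exists>c. k < k' \<longrightarrow> (\<forall>X\<in>K. norm (matpow X k') \<le> c * norm (E X))"
        proof (cases "k < k'")
          case True
          then have "D - k' < D - k" "1 \<le> k'" using kD by auto
          then show ?thesis using less.hyps by blast
        qed simp
      qed
      then obtain cf where cf: "\<And>k'. k < k' \<Longrightarrow> \<forall>X\<in>K. norm (matpow X k') \<le> cf k' * norm (E X)"
        by metis
      define c where "c = \<kappa> * (norm (mat 1::'a^'n^'n) * (\<kappa> * B) ^ j) + (\<Sum>l\<in>{2..<D}. cf (j + l))"
      show ?thesis
      proof (intro exI[of _ c] ballI)
        fix X assume X: "X \<in> K"
        have split1: "{1..<D} = insert 1 {2..<D}" using kD kj by auto
        have "matpow X j ** E X = matpow X k + (\<Sum>l\<in>{2..<D}. inverse (fact l) *\<^sub>R matpow X (j + l))"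
        proof -
          have s: "(\<Sum>l\<in>{1..<D}. g l) = g 1 + (\<Sum>l\<in>{2..<D}. g l)" for g :: "nat \<Rightarrow> 'a^'n^'n"
            unfolding split1 by simp
          show ?thesis
            using ident[OF X, of j] s[of "\<lambda>l. inverse (fact l) *\<^sub>R matpow X (j + l)"] kj by simp
        qed
        then have eq: "matpow X k = matpow X j ** E X - (\<Sum>l\<in>{2..<D}. inverse (fact l) *\<^sub>R matpow X (j + l))"
          by (simp add: algebra_simps)
        have n1: "norm (matpow X j ** E X) \<le> \<kappa> * (norm (mat 1::'a^'n^'n) * (\<kappa> * B) ^ j) * norm (E X)"
        proof -
          have "norm (matpow X j ** E X) \<le> \<kappa> * norm (matpow X j) * norm (E X)"
            using norm_mm[of "matpow X j" "E X"] by (simp add: \<kappa>_def)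
          also have "\<dots> \<le> \<kappa> * (norm (mat 1::'a^'n^'n) * (\<kappa> * B) ^ j) * norm (E X)"
            using Pbd[OF X, of j] kpos by (intro mult_right_mono mult_left_mono) auto
          finally show ?thesis .
        qed
        have n2: "norm (\<Sum>l\<in>{2..<D}. inverse (fact l) *\<^sub>R matpow X (j + l))
            \<le> (\<Sum>l\<in>{2..<D}. cf (j + l) * norm (E X))"
        proof (rule sum_norm_le)
          fix l assume l: "l \<in> {2..<D}"
          then have "k < j + l" using kj by auto
          then have a: "norm (matpow X (j + l)) \<le> cf (j + l) * norm (E X)" using cf X by blast
          have b: "inverse (fact l :: real) \<le> 1" using fact_ge_1[of l] by (simp add: inverse_le_1_iff)
          have "norm (inverse (fact l) *\<^sub>R matpow X (j + l)) = inverse (fact l) * norm (matpow X (j + l))"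
            by simp
          also have "\<dots> \<le> norm (matpow X (j + l))"
            using b mult_right_mono[OF b norm_ge_zero[of "matpow X (j + l)"]] by simp
          finally show "norm (inverse (fact l) *\<^sub>R matpow X (j + l)) \<le> cf (j + l) * norm (E X)"
            using a by linarith
        qed
        have "norm (matpow X k) \<le> norm (matpow X j ** E X)
            + norm (\<Sum>l\<in>{2..<D}. inverse (fact l) *\<^sub>R matpow X (j + l))"
          by (subst eq) (rule norm_triangle_ineq4)
        then show "norm (matpow X k) \<le> c * norm (E X)"
        proof -
          have "(\<Sum>l\<in>{2..<D}. cf (j + l) * norm (E X)) = (\<Sum>l\<in>{2..<D}. cf (j + l)) * norm (E X)"
            by (simp add: sum_distrib_right)
          moreover have "c * norm (E X) = \<kappa> * (norm (mat 1::'a^'n^'n) * (\<kappa> * B) ^ j) * norm (E X)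
              + (\<Sum>l\<in>{2..<D}. cf (j + l)) * norm (E X)"
            unfolding c_def by (simp add: distrib_right)
          ultimately show ?thesis using n1 n2 \<open>norm (matpow X k) \<le> _\<close> by linarith
        qed
      qed
    qed
  qed
  have "\<forall>l. \<exists>c. 1 \<le> l \<longrightarrow> (\<forall>X\<in>K. norm (matpow X l) \<le> c * norm (E X))"
    using bkw by blast
  then obtain cc where cc: "\<And>l. 1 \<le> l \<Longrightarrow> \<forall>X\<in>K. norm (matpow X l) \<le> cc l * norm (E X)"
    by metis
  define S where "S = (\<Sum>l\<in>{1..<D}. cc l)"
  obtain M where M: "M \<ge> 0" "\<And>A. N A \<le> M * norm A" using N_upper[OF NN] by blast
  obtain L where L: "L \<ge> 0" "\<And>A. norm A \<le> L * N A" using N_lower[OF NN] by blast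
  have up: "norm (mat_exp (mat_scale (of_real t) X) - mat 1) \<le> t * (S * norm (E X))"
    if t: "t \<in> {0..1}" and X: "X \<in> K" for t X
  proof -
    have "norm (mat_exp (mat_scale (of_real t) X) - mat 1)
        \<le> (\<Sum>l\<in>{1..<D}. t * (cc l * norm (E X)))"
      unfolding Et[OF X]
    proof (rule sum_norm_le)
      fix l assume l: "l \<in> {1..<D}"
      then have a: "norm (matpow X l) \<le> cc l * norm (E X)" using cc X by auto
      have tl: "t ^ l \<le> t" using power_decreasing[of 1 l t] t l by auto
      have ifl: "inverse (fact l :: real) \<le> 1" using fact_ge_1[of l] by (simp add: inverse_le_1_iff)
      have co: "\<bar>t ^ l * inverse (fact l)\<bar> \<le> t"
      proof -
        have "\<bar>t ^ l * inverse (fact l)\<bar> = t ^ l * inverse (fact l)" using t by simp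
        also have "\<dots> \<le> t ^ l * 1" using t ifl by (intro mult_left_mono) auto
        finally show ?thesis using tl by simp
      qed
      have "norm ((t ^ l * inverse (fact l)) *\<^sub>R matpow X l) = \<bar>t ^ l * inverse (fact l)\<bar> * norm (matpow X l)"
        by simp
      also have "\<dots> \<le> t * norm (matpow X l)" using co by (intro mult_right_mono) auto
      also have "\<dots> \<le> t * (cc l * norm (E X))" using a t by (intro mult_left_mono) auto
      finally show "norm ((t ^ l * inverse (fact l)) *\<^sub>R matpow X l) \<le> t * (cc l * norm (E X))" .
    qed
    also have "\<dots> = t * (S * norm (E X))" by (simp add: S_def sum_distrib_left sum_distrib_right)
    finally show ?thesis .
  qed
  define C where "C = M * \<bar>S\<bar> * L + 1"
  show ?thesis
  proof (intro exI[of _ C] conjI ballI)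
    have "M * \<bar>S\<bar> * L \<ge> 0" using M(1) L(1) by simp
    then show "C > 0" by (simp add: C_def)
    fix t :: real and X assume t: "t \<in> {0..1}" and X: "X \<in> K"
    have t0: "t \<ge> 0" using t by simp
    have NE0: "N (E X) \<ge> 0" using N_nonneg[OF NN] .
    have "N (mat_exp (mat_scale (of_real t) X) - mat 1) \<le> M * norm (mat_exp (mat_scale (of_real t) X) - mat 1)"
      by (rule M(2))
    also have "\<dots> \<le> M * (t * (S * norm (E X)))" using up[OF t X] M(1) by (rule mult_left_mono)
    also have "\<dots> \<le> M * (t * (\<bar>S\<bar> * (L * N (E X))))"
    proof -
      have "S * norm (E X) \<le> \<bar>S\<bar> * norm (E X)" by (simp add: mult_right_mono)
      also have "\<dots> \<le> \<bar>S\<bar> * (L * N (E X))" using L(2)[of "E X"] by (simp add: mult_left_mono)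
      finally show ?thesis using M(1) t0 by (intro mult_left_mono) auto
    qed
    also have "\<dots> = (M * \<bar>S\<bar> * L) * (t * N (E X))" by (simp add: mult_ac)
    also have "\<dots> \<le> C * (t * N (E X))"
      unfolding C_def using t0 NE0 by (intro mult_right_mono) auto
    finally show "N (mat_exp (mat_scale (of_real t) X) - mat 1) \<le> C * t * N (mat_exp X - mat 1)"
      by (simp add: E_def mult_ac)
  qed
qed

theorem mainTheorem11:
  shows
  "(\<forall>(K :: (real^'n^'n) set) (N :: real^'n^'n \<Rightarrow> real).
      compact K \<and> (\<forall>X\<in>K. nilpotent_mat X) \<and> is_mat_norm N \<longrightarrow>
      (\<exists>C>0. \<forall>t\<in>{0..1}. \<forall>X\<in>K.
         N (mat_exp (mat_scale (of_real t) X) - mat 1) \<le> C * t * N (mat_exp X - mat 1)))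
   \<and>
   (\<forall>(K :: (complex^'n^'n) set) (N :: complex^'n^'n \<Rightarrow> real).
      compact K \<and> (\<forall>X\<in>K. nilpotent_mat X) \<and> is_mat_norm N \<longrightarrow>
      (\<exists>C>0. \<forall>t\<in>{0..1}. \<forall>X\<in>K.
         N (mat_exp (mat_scale (of_real t) X) - mat 1) \<le> C * t * N (mat_exp X - mat 1)))"
  using main_gen[where 'a=real and 'n='n] main_gen[where 'a=complex and 'n='n] by blast

end
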